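(* Let $\Omega\subset H^2$ be a bounded open set, and let $f$ be a bounded function on $\Omega$ which is $C^\infty$ in $\Omega$, continuous on $\overline{\Omega}\setminus\{x=0\}$, satisfies $f_{xx}+f_{yy}+3x^{-1}f_x=0$ in $\Omega$, and satisfies $f=0$ on $\partial\Omega\setminus\{x=0\}$. Then $f\equiv 0$ on $\Omega$.
   Context: $H^2=\{(x,y)\in\mathbb{R}^2: x>0\}$ is the open right half-plane. *)

theory Defs
  imports "HOL-Analysis.Analysis"
begin

definition partial :: "bool \<Rightarrow> (real \<times> real \<Rightarrow> real) \<Rightarrow> real \<times> real \<Rightarrow> real" where
  "partial d f p = (if d then deriv (\<lambda>t. f (t, snd p)) (fst p)
                    else deriv (\<lambda>t. f (fst p, t)) (snd p))"

definition partial_differentiable :: "bool \<Rightarrow> (real \<times> real \<Rightarrow> real) \<Rightarrow> real \<times> real \<Rightarrow> bool" where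
  "partial_differentiable d f p = (if d then (\<lambda>t. f (t, snd p)) differentiable (at (fst p))
                    else (\<lambda>t. f (fst p, t)) differentiable (at (snd p)))"

text \<open>Iterated partial derivative along a list of directions (applied right to left).\<close>
fun iter_partial :: "bool list \<Rightarrow> (real \<times> real \<Rightarrow> real) \<Rightarrow> real \<times> real \<Rightarrow> real" where
  "iter_partial [] f = f"
| "iter_partial (d # ds) f = partial d (iter_partial ds f)"

definition smooth_on :: "(real \<times> real) set \<Rightarrow> (real \<times> real \<Rightarrow> real) \<Rightarrow> bool" where
  "smooth_on S f = (\<forall>ds. continuous_on S (iter_partial ds f) \<and>
                      (\<forall>d. \<forall>p\<in>S. partial_differentiable d (iter_partial ds f) p))"

end

theory Submission
  imports Defs
begin

lemma second_deriv_max: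
  fixes g g' :: "real \<Rightarrow> real"
  assumes r: "r > 0"
    and d1: "\<forall>t\<in>ball a r. (g has_real_derivative g' t) (at t)"
    and d2: "(g' has_real_derivative gg) (at a)"
    and mx: "\<forall>t\<in>ball a r. g t \<le> g a"
  shows "g' a = 0 \<and> gg \<le> 0"
proof -
  have ga: "(g has_real_derivative g' a) (at a)" using d1 r by simp
  have z: "g' a = 0"
    by (rule DERIV_local_max[OF ga r]) (use mx in \<open>auto simp: dist_real_def\<close>)
  moreover have "gg \<le> 0"
  proof (rule ccontr)
    assume "\<not> gg \<le> 0"
    then have "gg > 0" by simp
    from DERIV_pos_inc_right[OF d2 this] obtain d where d: "d > 0"
      "\<forall>h>0. h < d \<longrightarrow> g' a < g' (a + h)" by blast
    define h where "h = min d r / 2"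
    have h: "h > 0" "h < d" "h < r" using d r by (auto simp: h_def)
    have "\<exists>z>a. z < a + h \<and> g (a + h) - g a = (a + h - a) * g' z"
      by (rule MVT2) (use h d1 in \<open>auto simp: dist_real_def\<close>)
    then obtain z where zz: "z > a" "z < a + h" "g (a + h) - g a = h * g' z" by auto
    have za: "z - a > 0" "z - a < d" using zz h by auto
    have "g' a < g' (a + (z - a))" using d(2)[rule_format, OF za] .
    then have "g' z > 0" using z by simp
    then have "h * g' z > 0" using h by (simp add: mult_pos_pos)
    then have "g (a + h) > g a" using zz by linarith
    moreover have "a + h \<in> ball a r" using h by (simp add: dist_real_def)
    ultimately show False using mx by force
  qed
  ultimately show ?thesis by simp
qed

lemma core:
  fixes \<Omega> :: "(real \<times> real) set" and f fx fxx fy fyy :: "real \<times> real \<Rightarrow> real"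
  assumes op: "open \<Omega>" and bd: "bounded \<Omega>" and pos: "\<Omega> \<subseteq> {p. fst p > 0}"
    and B: "\<forall>p\<in>\<Omega>. f p \<le> B"
    and cont: "continuous_on (closure \<Omega> - {p. fst p = 0}) f"
    and A1: "\<forall>p\<in>\<Omega>. ((\<lambda>t. f (t, snd p)) has_real_derivative fx p) (at (fst p))"
    and A2: "\<forall>p\<in>\<Omega>. ((\<lambda>t. fx (t, snd p)) has_real_derivative fxx p) (at (fst p))"
    and A3: "\<forall>p\<in>\<Omega>. ((\<lambda>s. f (fst p, s)) has_real_derivative fy p) (at (snd p))"
    and A4: "\<forall>p\<in>\<Omega>. ((\<lambda>s. fy (fst p, s)) has_real_derivative fyy p) (at (snd p))"
    and A5: "\<forall>p\<in>\<Omega>. fxx p + fyy p + 3 / fst p * fx p = 0"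
    and fr: "\<forall>p\<in>frontier \<Omega>. fst p \<noteq> 0 \<longrightarrow> f p = 0"
    and p0: "p0 \<in> \<Omega>"
  shows "f p0 \<le> 0"
proof (rule ccontr)
  assume "\<not> f p0 \<le> 0"
  then have v: "f p0 > 0" by simp
  define v where "v = f p0"
  have "bounded (closure \<Omega>)" using bd by (rule bounded_closure)
  then obtain R where R: "\<forall>p\<in>closure \<Omega>. norm p \<le> R" by (auto simp: bounded_iff)
  define M where "M = R^2"
  have yM: "(snd p)^2 \<le> M" if "p \<in> closure \<Omega>" for p
  proof -
    have "\<bar>snd p\<bar> \<le> R" using R that norm_snd_le[of "snd p" "fst p"] by force
    then show ?thesis unfolding M_def by (metis abs_le_square_iff abs_of_nonneg abs_ge_zero order_trans)
  qed
  have M0: "M \<ge> 0" unfolding M_def by simp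
  define x0 where "x0 = fst p0"
  have x0: "x0 > 0" using pos p0 by (auto simp: x0_def)
  define \<epsilon> where "\<epsilon> = v * x0^2 / 4"
  define \<delta> where "\<delta> = v / (4 * (M + 1))"
  have e0: "\<epsilon> > 0" using v x0 by (simp add: \<epsilon>_def v_def)
  have d0: "\<delta> > 0" using v M0 by (simp add: \<delta>_def v_def)
  have dM: "\<delta> * M < v / 4"
  proof -
    have "\<delta> * M = v / 4 * (M / (M + 1))" using M0 by (simp add: \<delta>_def field_simps)
    also have "\<dots> < v / 4 * 1" using v M0 by (intro mult_strict_left_mono) (auto simp: v_def)
    finally show ?thesis by simp
  qed
  define c where "c = \<epsilon> / (\<bar>B\<bar> + \<delta> * M + 1)"
  have c0: "c > 0" using e0 d0 M0 by (simp add: c_def add_nonneg_pos)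
  define \<eta> where "\<eta> = min x0 (min 1 c) / 2"
  have eta: "\<eta> > 0" "\<eta> < x0" "\<eta> \<le> 1" "\<eta> < c" using x0 c0 by (auto simp: \<eta>_def)
  have eta2: "\<eta>^2 < c"
  proof -
    have "\<eta>^2 \<le> \<eta>" using eta by (simp add: power2_eq_square mult_le_cancel_right1)
    then show ?thesis using eta by simp
  qed
  have big: "\<epsilon> / \<eta>^2 > \<bar>B\<bar> + \<delta> * M + 1"
  proof -
    have "\<epsilon> / \<eta>^2 > \<epsilon> / c" using eta2 eta e0 by (intro divide_strict_left_mono) auto
    moreover have "\<epsilon> / c = \<bar>B\<bar> + \<delta> * M + 1" using e0 d0 M0 by (simp add: c_def add_nonneg_pos)
    ultimately show ?thesis by simp
  qed
  define w where "w p = f p - \<epsilon> / (fst p)^2 + \<delta> * (snd p)^2" for p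
  define K where "K = closure \<Omega> \<inter> {p. fst p \<ge> \<eta>}"
  have wp0: "w p0 \<ge> 3 * v / 4"
  proof -
    have "\<epsilon> / (fst p0)^2 = v / 4" using x0 by (simp add: \<epsilon>_def x0_def)
    moreover have "\<delta> * (snd p0)^2 \<ge> 0" using d0 by simp
    ultimately show ?thesis by (simp add: w_def v_def)
  qed
  have "compact (closure \<Omega>)" using bd by (simp add: compact_closure)
  moreover have "closed {p::real\<times>real. fst p \<ge> \<eta>}" by (intro closed_Collect_le continuous_intros)
  ultimately have Kc: "compact K" unfolding K_def by (rule compact_Int_closed)
  have p0K: "p0 \<in> K" using p0 eta closure_subset by (auto simp: K_def x0_def)
  have Ksub: "K \<subseteq> closure \<Omega> - {p. fst p = 0}" using eta by (auto simp: K_def)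
  have Kpos: "fst p > 0" if "p \<in> K" for p using that eta by (auto simp: K_def)
  have wc: "continuous_on K w" unfolding w_def
    by (intro continuous_intros continuous_on_subset[OF cont Ksub]) (use Kpos in force)
  obtain q where qK: "q \<in> K" and qmax: "\<forall>p\<in>K. w p \<le> w q"
    using continuous_attains_sup[OF Kc _ wc] p0K by blast
  have wq: "w q \<ge> 3 * v / 4" using qmax p0K wp0 by force
  have cl: "closure \<Omega> = \<Omega> \<union> frontier \<Omega>"
    using op closure_subset by (auto simp: frontier_def interior_open)
  have qcl: "q \<in> closure \<Omega>" and qeta: "fst q \<ge> \<eta>" using qK by (auto simp: K_def)
  have "q \<in> \<Omega>"
  proof (rule ccontr)
    assume "q \<notin> \<Omega>"
    then have "q \<in> frontier \<Omega>" using qcl cl by auto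
    then have "f q = 0" using fr qeta eta by auto
    moreover have "\<epsilon> / (fst q)^2 \<ge> 0" using e0 by simp
    moreover have "\<delta> * (snd q)^2 \<le> \<delta> * M" using yM[OF qcl] d0 by simp
    ultimately have "w q \<le> \<delta> * M" by (simp add: w_def)
    then show False using wq dM v by (simp add: v_def)
  qed
  have "fst q \<noteq> \<eta>"
  proof
    assume h: "fst q = \<eta>"
    have "f q \<le> B" using B \<open>q \<in> \<Omega>\<close> by blast
    moreover have "\<delta> * (snd q)^2 \<le> \<delta> * M" using yM[OF qcl] d0 by simp
    ultimately have "w q \<le> B - \<epsilon> / \<eta>^2 + \<delta> * M"
      using h by (simp add: w_def)
    then have "w q < 0" using big by simp
    then show False using wq v by (simp add: v_def)
  qed
  then have qgt: "fst q > \<eta>" using qeta by simp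
  have opn: "open (\<Omega> \<inter> {p. fst p > \<eta>})"
    by (intro open_Int op open_Collect_less continuous_intros)
  obtain r where r: "r > 0" "ball q r \<subseteq> \<Omega> \<inter> {p. fst p > \<eta>}"
    using open_contains_ball_eq[OF opn, of q] \<open>q \<in> \<Omega>\<close> qgt by auto
  have ballK: "ball q r \<subseteq> K" using r closure_subset by (force simp: K_def)
  obtain a b where qab: "q = (a, b)" by (cases q)
  have a0: "a > 0" using qgt eta qab by simp
  have inb1: "(t, b) \<in> ball q r" if "t \<in> ball a r" for t
    using that by (simp add: qab dist_Pair_Pair dist_real_def)
  have inb2: "(a, s) \<in> ball q r" if "s \<in> ball b r" for s
    using that by (simp add: qab dist_Pair_Pair dist_real_def)
  have qO: "(a, b) \<in> \<Omega>" using \<open>q \<in> \<Omega>\<close> qab by simp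
  have X: "fx (a, b) + 2 * \<epsilon> / a^3 = 0 \<and> fxx (a, b) - 6 * \<epsilon> / a^4 \<le> 0"
  proof -
    have "(\<lambda>t. fx (t, b) + 2 * \<epsilon> / t^3) a = 0 \<and> fxx (a, b) - 6 * \<epsilon> / a^4 \<le> 0"
    proof (rule second_deriv_max[OF r(1), where g = "\<lambda>t. f (t, b) - \<epsilon> / t^2 + \<delta> * b^2"
        and g' = "\<lambda>t. fx (t, b) + 2 * \<epsilon> / t^3" and gg = "fxx (a, b) - 6 * \<epsilon> / a^4"])
      show "\<forall>t\<in>ball a r. ((\<lambda>t. f (t, b) - \<epsilon> / t\<^sup>2 + \<delta> * b\<^sup>2) has_real_derivative
           fx (t, b) + 2 * \<epsilon> / t ^ 3) (at t)"
      proof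
        fix t assume t: "t \<in> ball a r"
        have tO: "(t, b) \<in> \<Omega>" and "\<eta> < t" using inb1[OF t] r by auto
        then have tp: "t > 0" using eta by simp
        have "((\<lambda>t. f (t, b)) has_real_derivative fx (t, b)) (at t)" using A1 tO by force
        then show "((\<lambda>t. f (t, b) - \<epsilon> / t\<^sup>2 + \<delta> * b\<^sup>2) has_real_derivative
           fx (t, b) + 2 * \<epsilon> / t ^ 3) (at t)"
          using tp by (auto intro!: derivative_eq_intros simp: field_simps power2_eq_square power3_eq_cube)
      qed
      have "((\<lambda>t. fx (t, b)) has_real_derivative fxx (a, b)) (at a)" using A2 qO by force
      then show "((\<lambda>t. fx (t, b) + 2 * \<epsilon> / t ^ 3) has_real_derivative fxx (a, b) - 6 * \<epsilon> / a ^ 4) (at a)"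
        using a0 by (auto intro!: derivative_eq_intros simp: field_simps eval_nat_numeral)
      show "\<forall>t\<in>ball a r. f (t, b) - \<epsilon> / t\<^sup>2 + \<delta> * b\<^sup>2 \<le> f (a, b) - \<epsilon> / a\<^sup>2 + \<delta> * b\<^sup>2"
      proof
        fix t assume t: "t \<in> ball a r"
        have "w (t, b) \<le> w q" using qmax ballK inb1[OF t] by blast
        then show "f (t, b) - \<epsilon> / t\<^sup>2 + \<delta> * b\<^sup>2 \<le> f (a, b) - \<epsilon> / a\<^sup>2 + \<delta> * b\<^sup>2"
          by (simp add: w_def qab)
      qed
    qed
    then show ?thesis by simp
  qed
  have Y: "fyy (a, b) + 2 * \<delta> \<le> 0"
  proof -
    have "(\<lambda>s. fy (a, s) + 2 * \<delta> * s) b = 0 \<and> fyy (a, b) + 2 * \<delta> \<le> 0"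
    proof (rule second_deriv_max[OF r(1), where g = "\<lambda>s. f (a, s) - \<epsilon> / a^2 + \<delta> * s^2"
        and g' = "\<lambda>s. fy (a, s) + 2 * \<delta> * s" and gg = "fyy (a, b) + 2 * \<delta>"])
      show "\<forall>s\<in>ball b r. ((\<lambda>s. f (a, s) - \<epsilon> / a\<^sup>2 + \<delta> * s\<^sup>2) has_real_derivative
           fy (a, s) + 2 * \<delta> * s) (at s)"
      proof
        fix s assume s: "s \<in> ball b r"
        have sO: "(a, s) \<in> \<Omega>" using inb2[OF s] r by auto
        have "((\<lambda>s. f (a, s)) has_real_derivative fy (a, s)) (at s)" using A3 sO by force
        then show "((\<lambda>s. f (a, s) - \<epsilon> / a\<^sup>2 + \<delta> * s\<^sup>2) has_real_derivative
           fy (a, s) + 2 * \<delta> * s) (at s)"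
          by (auto intro!: derivative_eq_intros simp: field_simps power2_eq_square)
      qed
      have "((\<lambda>s. fy (a, s)) has_real_derivative fyy (a, b)) (at b)" using A4 qO by force
      then show "((\<lambda>s. fy (a, s) + 2 * \<delta> * s) has_real_derivative fyy (a, b) + 2 * \<delta>) (at b)"
        by (auto intro!: derivative_eq_intros)
      show "\<forall>s\<in>ball b r. f (a, s) - \<epsilon> / a\<^sup>2 + \<delta> * s\<^sup>2 \<le> f (a, b) - \<epsilon> / a\<^sup>2 + \<delta> * b\<^sup>2"
      proof
        fix s assume s: "s \<in> ball b r"
        have "w (a, s) \<le> w q" using qmax ballK inb2[OF s] by blast
        then show "f (a, s) - \<epsilon> / a\<^sup>2 + \<delta> * s\<^sup>2 \<le> f (a, b) - \<epsilon> / a\<^sup>2 + \<delta> * b\<^sup>2"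
          by (simp add: w_def qab)
      qed
    qed
    then show ?thesis by simp
  qed
  have E: "fxx (a, b) + fyy (a, b) + 3 / a * fx (a, b) = 0" using A5 qO by force
  have fxv: "fx (a, b) = - 2 * \<epsilon> / a^3" using X by simp
  have "3 / a * fx (a, b) = - 6 * \<epsilon> / a^4" using a0 unfolding fxv by (simp add: field_simps eval_nat_numeral)
  then have "fxx (a, b) + fyy (a, b) - 6 * \<epsilon> / a^4 = 0" using E by simp
  then show False using X Y d0 by linarith
qed

theorem proposition4p2:
  fixes \<Omega> :: "(real \<times> real) set" and f :: "real \<times> real \<Rightarrow> real"
  assumes "open \<Omega>" and "bounded \<Omega>" and "\<Omega> \<subseteq> {p. fst p > 0}"
    and "bounded (f ` \<Omega>)"
    and "smooth_on \<Omega> f"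
    and "continuous_on (closure \<Omega> - {p. fst p = 0}) f"
    and "\<forall>p\<in>\<Omega>. iter_partial [True, True] f p + iter_partial [False, False] f p
                 + 3 / fst p * partial True f p = 0"
    and "\<forall>p\<in>frontier \<Omega>. fst p \<noteq> 0 \<longrightarrow> f p = 0"
  shows "\<forall>p\<in>\<Omega>. f p = 0"
proof
  fix p0 assume p0: "p0 \<in> \<Omega>"
  obtain B where B: "\<forall>p\<in>\<Omega>. \<bar>f p\<bar> \<le> B" using assms(4) by (auto simp: bounded_iff)
  have sm: "\<And>ds d p. p \<in> \<Omega> \<Longrightarrow> partial_differentiable d (iter_partial ds f) p"
    using assms(5) by (auto simp: smooth_on_def)
  have A1: "\<forall>p\<in>\<Omega>. ((\<lambda>t. f (t, snd p)) has_real_derivative partial True f p) (at (fst p))"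
    using sm[of _ True "[]"] by (simp add: partial_def partial_differentiable_def DERIV_deriv_iff_real_differentiable)
  have A2: "\<forall>p\<in>\<Omega>. ((\<lambda>t. partial True f (t, snd p)) has_real_derivative iter_partial [True, True] f p) (at (fst p))"
    using sm[of _ True "[True]"]
    by (simp add: partial_def[of True "partial True f"] partial_differentiable_def DERIV_deriv_iff_real_differentiable)
  have A3: "\<forall>p\<in>\<Omega>. ((\<lambda>s. f (fst p, s)) has_real_derivative partial False f p) (at (snd p))"
    using sm[of _ False "[]"] by (simp add: partial_def partial_differentiable_def DERIV_deriv_iff_real_differentiable)
  have A4: "\<forall>p\<in>\<Omega>. ((\<lambda>s. partial False f (fst p, s)) has_real_derivative iter_partial [False, False] f p) (at (snd p))"
    using sm[of _ False "[False]"]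
    by (simp add: partial_def[of False "partial False f"] partial_differentiable_def DERIV_deriv_iff_real_differentiable)
  have "f p0 \<le> 0"
    by (rule core[OF assms(1-3) _ assms(6) A1 A2 A3 A4 assms(7) assms(8) p0, of B])
      (use B in force)
  moreover have "(\<lambda>p. - f p) p0 \<le> 0"
  proof (rule core[OF assms(1-3), where B = B and fx = "\<lambda>p. - partial True f p"
        and fxx = "\<lambda>p. - iter_partial [True, True] f p" and fy = "\<lambda>p. - partial False f p"
        and fyy = "\<lambda>p. - iter_partial [False, False] f p"])
    show "\<forall>p\<in>\<Omega>. - f p \<le> B" using B by force
    show "continuous_on (closure \<Omega> - {p. fst p = 0}) (\<lambda>p. - f p)"
      by (intro continuous_on_minus assms(6))
    show "\<forall>p\<in>\<Omega>. ((\<lambda>t. - f (t, snd p)) has_real_derivative - partial True f p) (at (fst p))"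
      using A1 by (auto intro: DERIV_minus)
    show "\<forall>p\<in>\<Omega>. ((\<lambda>t. - partial True f (t, snd p)) has_real_derivative - iter_partial [True, True] f p) (at (fst p))"
      using A2 by (auto intro: DERIV_minus)
    show "\<forall>p\<in>\<Omega>. ((\<lambda>s. - f (fst p, s)) has_real_derivative - partial False f p) (at (snd p))"
      using A3 by (auto intro: DERIV_minus)
    show "\<forall>p\<in>\<Omega>. ((\<lambda>s. - partial False f (fst p, s)) has_real_derivative - iter_partial [False, False] f p) (at (snd p))"
      using A4 by (auto intro: DERIV_minus)
    show "\<forall>p\<in>\<Omega>. - iter_partial [True, True] f p + - iter_partial [False, False] f p + 3 / fst p * - partial True f p = 0"
    proof
      fix p assume "p \<in> \<Omega>"
      then have "iter_partial [True, True] f p + iter_partial [False, False] f p + 3 / fst p * partial True f p = 0"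
        using assms(7) by blast
      then show "- iter_partial [True, True] f p + - iter_partial [False, False] f p + 3 / fst p * - partial True f p = 0"
        by (simp add: algebra_simps)
    qed
    show "\<forall>p\<in>frontier \<Omega>. fst p \<noteq> 0 \<longrightarrow> - f p = 0" using assms(8) by simp
    show "p0 \<in> \<Omega>" by (rule p0)
  qed
  ultimately show "f p0 = 0" by simp
qed

end
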